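(* Let $R\ge1$, $L\ge2$, and let $f_\theta,f_{\tilde\theta}\in\mathcal{N}_\rho(L,\boldsymbol n_L,R)$ share the same architecture, with parameter vectors $\theta,\tilde\theta\in\mathbb{R}^{\boldsymbol n_L}$. Set $\eta=1$ if $\rho$ is the sigmoid and $\eta=2$ if $\rho=\tanh$. Then for every $p\in\{1,\dots,d\}$ and $x\in\Omega$, $$|\partial_{x_p}^2f_\theta(x)-\partial_{x_p}^2f_{\tilde\theta}(x)|\le2(L-1)L\eta\sqrt{\boldsymbol n_L}\,\pi_{L-1}^3R^{3L-3}\|\theta-\tilde\theta\|_{\ell^2}.$$
   Context: $\Omega\subset(-1,1)^d$. Neural networks: widths $n_0=d,n_1,\dots,n_L=1$; $f^{(0)}(x)=x$, $f^{(\ell)}(x)=\rho(A^{(\ell)}f^{(\ell-1)}(x)+b^{(\ell)})$ for $\ell=1,\dots,L-1$ (componentwise $\rho$), $f_\theta=A^{(L)}f^{(L-1)}+b^{(L)}$, with $A^{(\ell)}\in\mathbb{R}^{n_\ell\times n_{\ell-1}}$, $b^{(\ell)}\in\mathbb{R}^{n_\ell}$; $\theta$ is the vector of all parameters (entries of all $A^{(\ell)},b^{(\ell)}$), $\boldsymbol n_L$ its number of (nonzero) entries; $\mathcal{N}_\rho(L,\boldsymbol n_L,R)$ is the class of such networks with all parameters bounded in absolute value by $R$. $\pi_i=\prod_{j=1}^in_j$. $\rho$ is $\tanh$ or the sigmoid $1/(1+e^{-t})$. *)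

theory Defs
  imports "HOL-Analysis.Analysis"
begin

datatype activation = Sigmoid | Tanh

definition sigmoid :: "real \<Rightarrow> real" where
  "sigmoid t = 1 / (1 + exp (- t))"

fun act :: "activation \<Rightarrow> real \<Rightarrow> real" where
  "act Sigmoid t = sigmoid t"
| "act Tanh t = tanh t"

fun eta :: "activation \<Rightarrow> real" where
  "eta Sigmoid = 1"
| "eta Tanh = 2"

text \<open>Widths: n :: nat => nat, with n 0 = d and n L = 1.
  Weights A l i j (layer l, row i < n l, column j < n (l-1)), biases b l i (i < n l).
  Vectors are functions nat => real (only the first n l components matter).\<close>

fun hidden :: "activation \<Rightarrow> (nat \<Rightarrow> nat) \<Rightarrow> (nat \<Rightarrow> nat \<Rightarrow> nat \<Rightarrow> real)
    \<Rightarrow> (nat \<Rightarrow> nat \<Rightarrow> real) \<Rightarrow> (nat \<Rightarrow> real) \<Rightarrow> nat \<Rightarrow> (nat \<Rightarrow> real)" where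
  "hidden \<rho> n A b x 0 = x"
| "hidden \<rho> n A b x (Suc l) =
     (\<lambda>i. act \<rho> ((\<Sum>j<n l. A (Suc l) i j * hidden \<rho> n A b x l j) + b (Suc l) i))"

definition net :: "activation \<Rightarrow> nat \<Rightarrow> (nat \<Rightarrow> nat) \<Rightarrow> (nat \<Rightarrow> nat \<Rightarrow> nat \<Rightarrow> real)
    \<Rightarrow> (nat \<Rightarrow> nat \<Rightarrow> real) \<Rightarrow> (nat \<Rightarrow> real) \<Rightarrow> real" where
  "net \<rho> L n A b x =
     (\<Sum>j<n (L - 1). A L 0 j * hidden \<rho> n A b x (L - 1) j) + b L 0"

definition params_bounded :: "nat \<Rightarrow> (nat \<Rightarrow> nat) \<Rightarrow> real \<Rightarrow> (nat \<Rightarrow> nat \<Rightarrow> nat \<Rightarrow> real)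
    \<Rightarrow> (nat \<Rightarrow> nat \<Rightarrow> real) \<Rightarrow> bool" where
  "params_bounded L n R A b \<longleftrightarrow>
     (\<forall>l\<in>{1..L}. (\<forall>i<n l. \<forall>j<n (l - 1). \<bar>A l i j\<bar> \<le> R) \<and> (\<forall>i<n l. \<bar>b l i\<bar> \<le> R))"

definition nparams :: "nat \<Rightarrow> (nat \<Rightarrow> nat) \<Rightarrow> nat" where
  "nparams L n = (\<Sum>l=1..L. n l * n (l - 1) + n l)"

definition param_dist :: "nat \<Rightarrow> (nat \<Rightarrow> nat) \<Rightarrow> (nat \<Rightarrow> nat \<Rightarrow> nat \<Rightarrow> real) \<Rightarrow> (nat \<Rightarrow> nat \<Rightarrow> real)
    \<Rightarrow> (nat \<Rightarrow> nat \<Rightarrow> nat \<Rightarrow> real) \<Rightarrow> (nat \<Rightarrow> nat \<Rightarrow> real) \<Rightarrow> real" where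
  "param_dist L n A b A' b' =
     sqrt (\<Sum>l=1..L. (\<Sum>i<n l. \<Sum>j<n (l - 1). (A l i j - A' l i j)\<^sup>2)
                    + (\<Sum>i<n l. (b l i - b' l i)\<^sup>2))"

definition piw :: "(nat \<Rightarrow> nat) \<Rightarrow> nat \<Rightarrow> nat" where
  "piw n i = (\<Prod>j=1..i. n j)"

end

theory Submission
  imports Defs
begin


fun d1 :: "activation \<Rightarrow> real \<Rightarrow> real" where
  "d1 Sigmoid t = sigmoid t * (1 - sigmoid t)"
| "d1 Tanh t = 1 - (tanh t)^2"
fun d2 :: "activation \<Rightarrow> real \<Rightarrow> real" where
  "d2 Sigmoid t = sigmoid t * (1 - sigmoid t) * (1 - 2 * sigmoid t)"
| "d2 Tanh t = -2 * tanh t * (1 - (tanh t)^2)"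
fun d3 :: "activation \<Rightarrow> real \<Rightarrow> real" where
  "d3 Sigmoid t = sigmoid t * (1 - sigmoid t) * (1 - 6 * sigmoid t + 6 * (sigmoid t)^2)"
| "d3 Tanh t = (1 - (tanh t)^2) * (6 * (tanh t)^2 - 2)"
fun c2 :: "activation \<Rightarrow> real" where
  "c2 Sigmoid = 1/4" | "c2 Tanh = 1"
fun c3 :: "activation \<Rightarrow> real" where
  "c3 Sigmoid = 1/4" | "c3 Tanh = 2"

lemma sigmoid_bounds: "0 < sigmoid t" "sigmoid t < 1"
  unfolding sigmoid_def by (auto simp: add_pos_pos)

lemma DERIV_sigmoid: "(sigmoid has_real_derivative sigmoid t * (1 - sigmoid t)) (at t)"
proof -
  have nz: "1 + exp (- t) \<noteq> 0" by (metis add_pos_pos exp_gt_zero less_numeral_extra(1) less_numeral_extra(3))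
  have "((\<lambda>t. 1 / (1 + exp (- t))) has_real_derivative
     (exp (-t) / (1 + exp (-t))^2)) (at t)"
    using nz by (auto intro!: derivative_eq_intros simp: power2_eq_square add_pos_pos
        field_simps)
  moreover have "exp (-t) / (1 + exp (-t))^2 = sigmoid t * (1 - sigmoid t)"
    unfolding sigmoid_def
    using nz by (simp add: divide_simps power2_eq_square)
  ultimately show ?thesis unfolding sigmoid_def[abs_def] by simp
qed

lemma DERIV_tanh': "(tanh has_real_derivative 1 - (tanh t)^2) (at t)"
  using has_field_derivative_tanh[OF _ DERIV_ident, of t] by simp

lemma DERIV_act: "(act \<rho> has_real_derivative d1 \<rho> t) (at t)"
proof (cases \<rho>)
  case Sigmoid
  have "act \<rho> = sigmoid" using Sigmoid by (auto simp: fun_eq_iff)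
  then show ?thesis using Sigmoid DERIV_sigmoid by simp
next
  case Tanh
  have "act \<rho> = tanh" using Tanh by (auto simp: fun_eq_iff)
  then show ?thesis using Tanh DERIV_tanh' by simp
qed


lemmas DERIV_sigmoid_chain = DERIV_sigmoid[THEN DERIV_chain2]
lemmas DERIV_tanh_chain = DERIV_tanh'[THEN DERIV_chain2]

lemma DERIV_d1: "(d1 \<rho> has_real_derivative d2 \<rho> t) (at t)"
proof (cases \<rho>)
  case Sigmoid
  have "((\<lambda>t. sigmoid t * (1 - sigmoid t)) has_real_derivative
     (sigmoid t * (1 - sigmoid t)) * (1 - sigmoid t) + sigmoid t * (- (sigmoid t * (1 - sigmoid t)))) (at t)"
    using DERIV_sigmoid[of t] by (auto intro!: derivative_eq_intros simp: algebra_simps)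
  moreover have "d1 \<rho> = (\<lambda>t. sigmoid t * (1 - sigmoid t))" using Sigmoid by (auto simp: fun_eq_iff)
  ultimately show ?thesis using Sigmoid by (simp add: algebra_simps)
next
  case Tanh
  have "((\<lambda>t. 1 - (tanh t)^2) has_real_derivative
     - (of_nat 2 * (tanh t)^1 * (1 - (tanh t)^2))) (at t)"
    by (intro derivative_eq_intros DERIV_tanh_chain DERIV_ident) auto
  moreover have "d1 \<rho> = (\<lambda>t. 1 - (tanh t)^2)" using Tanh by (auto simp: fun_eq_iff)
  ultimately show ?thesis using Tanh by (simp add: algebra_simps)
qed

lemma DERIV_d2: "(d2 \<rho> has_real_derivative d3 \<rho> t) (at t)"
proof (cases \<rho>)
  case Sigmoid
  define s where "s = sigmoid t"
  have "((\<lambda>t. sigmoid t * (1 - sigmoid t) * (1 - 2 * sigmoid t)) has_real_derivative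
     ((s * (1 - s)) * (1 - s) + s * (- (s * (1 - s)))) * (1 - 2 * s) + (s * (1 - s)) * (- (2 * (s * (1 - s))))) (at t)"
    unfolding s_def using DERIV_sigmoid[of t] by (auto intro!: derivative_eq_intros simp: algebra_simps)
  moreover have "d2 \<rho> = (\<lambda>t. sigmoid t * (1 - sigmoid t) * (1 - 2 * sigmoid t))" using Sigmoid by (auto simp: fun_eq_iff)
  moreover have "((s * (1 - s)) * (1 - s) + s * (- (s * (1 - s)))) * (1 - 2 * s) + (s * (1 - s)) * (- (2 * (s * (1 - s))))
     = s * (1 - s) * (1 - 6 * s + 6 * s^2)" by (simp add: algebra_simps power2_eq_square)
  ultimately show ?thesis using Sigmoid by (simp add: s_def)
next
  case Tanh
  define u where "u = tanh t"
  have "((\<lambda>t. -2 * tanh t * (1 - (tanh t)^2)) has_real_derivative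
     (-2 * (1 - u^2)) * (1 - u^2) + (-2 * u) * (- (of_nat 2 * u^1 * (1 - u^2)))) (at t)"
    unfolding u_def by (intro derivative_eq_intros DERIV_tanh_chain DERIV_ident) auto
  moreover have "d2 \<rho> = (\<lambda>t. -2 * tanh t * (1 - (tanh t)^2))" using Tanh by (auto simp: fun_eq_iff)
  moreover have "(-2 * (1 - u^2)) * (1 - u^2) + (-2 * u) * (- (of_nat 2 * u^1 * (1 - u^2)))
     = (1 - u^2) * (6 * u^2 - 2)" by (simp add: algebra_simps power2_eq_square)
  ultimately show ?thesis using Tanh by (simp add: u_def)
qed

lemma act_bound: "\<bar>act \<rho> t\<bar> \<le> 1"
  using sigmoid_bounds[of t] tanh_real_bounds[of t] by (cases \<rho>) auto

lemma quarter: "(s::real) * (1 - s) \<le> 1/4"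
proof -
  have "0 \<le> (s - 1/2)^2" by simp
  then show ?thesis by (simp add: power2_eq_square algebra_simps)
qed

lemma d1_bound: "\<bar>d1 \<rho> t\<bar> \<le> 1"
proof (cases \<rho>)
  case Sigmoid
  have s: "0 < sigmoid t" "sigmoid t < 1" using sigmoid_bounds[of t] by auto
  have "0 \<le> sigmoid t * (1 - sigmoid t)" using s by simp
  then show ?thesis using Sigmoid quarter[of "sigmoid t"] by simp
next
  case Tanh
  have "(tanh t)^2 < 1" "0 \<le> (tanh t)^2" using tanh_real_bounds[of t] by (auto simp: abs_square_less_1)
  then show ?thesis using Tanh by simp
qed

lemma d2_bound: "\<bar>d2 \<rho> t\<bar> \<le> c2 \<rho>"
proof (cases \<rho>)
  case Sigmoid
  define s where "s = sigmoid t"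
  have s: "0 < s" "s < 1" using sigmoid_bounds[of t] by (auto simp: s_def)
  have a: "0 \<le> s * (1 - s)" "s * (1 - s) \<le> 1/4" using s quarter[of s] by auto
  have b: "\<bar>1 - 2 * s\<bar> \<le> 1" using s by auto
  have "\<bar>s * (1 - s) * (1 - 2 * s)\<bar> \<le> 1/4 * 1"
    unfolding abs_mult using a b by (intro mult_mono) auto
  then show ?thesis using Sigmoid by (simp add: s_def)
next
  case Tanh
  define u where "u = tanh t"
  have u: "-1 < u" "u < 1" using tanh_real_bounds[of t] by (auto simp: u_def)
  have "\<bar>-2 * u * (1 - u^2)\<bar> \<le> 1"
  proof -
    define a where "a = \<bar>u\<bar>"
    have a: "0 \<le> a" "a \<le> 1" using u by (auto simp: a_def)
    have "\<bar>-2 * u * (1 - u^2)\<bar> = 2 * a * (1 - a^2)"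
    proof -
      have "0 \<le> 1 - u^2" using u by (simp add: abs_square_less_1 less_imp_le)
      then show ?thesis by (simp add: a_def abs_mult power2_abs)
    qed
    also have "\<dots> \<le> 1"
    proof -
      have h1: "0 \<le> 2*a*(a-3/5)^2" using a by simp
      have h2: "0 \<le> (a-17/30)^2" by simp
      have e1: "2*a*(a-3/5)^2 = 2*a^3 - (12/5)*a^2 + (18/25)*a"
        by (simp add: power2_eq_square power3_eq_cube algebra_simps)
      have e2: "(a-17/30)^2 = a^2 - (17/15)*a + 289/900"
        by (simp add: power2_eq_square algebra_simps)
      have e3: "2 * a * (1 - a^2) = 2*a - 2*a^3"
        by (simp add: power2_eq_square power3_eq_cube algebra_simps)
      show ?thesis using h1 h2 unfolding e1 e2 e3 by linarith
    qed
    finally show ?thesis .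
  qed
  then show ?thesis using Tanh by (simp add: u_def)
qed

lemma d3_bound: "\<bar>d3 \<rho> t\<bar> \<le> c3 \<rho>"
proof (cases \<rho>)
  case Sigmoid
  define s where "s = sigmoid t"
  have s: "0 < s" "s < 1" using sigmoid_bounds[of t] by (auto simp: s_def)
  have a: "0 \<le> s * (1 - s)" "s * (1 - s) \<le> 1/4" using s quarter[of s] by auto
  have e: "1 - 6 * s + 6 * s^2 = 1 - 6 * (s * (1 - s))" by (simp add: power2_eq_square algebra_simps)
  have b: "\<bar>1 - 6 * s + 6 * s^2\<bar> \<le> 1" unfolding e using a by (simp add: abs_le_iff)
  have "\<bar>s * (1 - s) * (1 - 6 * s + 6 * s^2)\<bar> \<le> 1/4 * 1"
    unfolding abs_mult using a b by (intro mult_mono) auto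
  then show ?thesis using Sigmoid by (simp add: s_def)
next
  case Tanh
  define u where "u = tanh t"
  have u: "-1 < u" "u < 1" using tanh_real_bounds[of t] by (auto simp: u_def)
  define v where "v = u^2"
  have v: "0 \<le> v" "v < 1" using u by (auto simp: v_def abs_square_less_1)
  have h1: "0 \<le> (v - 2/3)^2" by simp
  have h2: "0 \<le> v * (8 - 6 * v)" using v by simp
  have e1: "(v - 2/3)^2 = v^2 - (4/3) * v + 4/9" by (simp add: power2_eq_square algebra_simps)
  have e2: "v * (8 - 6 * v) = 8 * v - 6 * v^2" by (simp add: power2_eq_square algebra_simps)
  have e3: "(1 - v) * (6 * v - 2) = 8 * v - 6 * v^2 - 2" by (simp add: power2_eq_square algebra_simps)
  have "\<bar>(1 - v) * (6 * v - 2)\<bar> \<le> 2" unfolding e3 abs_le_iff using h1 h2 unfolding e1 e2 by linarith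
  then show ?thesis using Tanh by (simp add: u_def v_def)
qed

lemma c2_le1: "c2 \<rho> \<le> 1" and c2_nonneg: "0 \<le> c2 \<rho>" and c3_nonneg: "0 \<le> c3 \<rho>"
  by (cases \<rho>; simp)+

lemma lipschitz_deriv:
  fixes f f' :: "real \<Rightarrow> real"
  assumes "\<And>t. (f has_real_derivative f' t) (at t)" "\<And>t. \<bar>f' t\<bar> \<le> M"
  shows "\<bar>f a - f b\<bar> \<le> M * \<bar>a - b\<bar>"
proof -
  have key: "\<bar>f y - f x\<bar> \<le> M * \<bar>y - x\<bar>" if xy: "x < y" for x y
  proof -
    obtain z where "f y - f x = (y - x) * f' z" using MVT2[OF xy, of f f'] assms(1) by auto
    then have "\<bar>f y - f x\<bar> = \<bar>y - x\<bar> * \<bar>f' z\<bar>" by (simp add: abs_mult)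
    also have "\<dots> \<le> \<bar>y - x\<bar> * M" by (intro mult_left_mono assms(2)) auto
    finally show ?thesis by (simp add: mult.commute)
  qed
  show ?thesis
  proof (cases a b rule: linorder_cases)
    case less then show ?thesis using key[OF less] by (simp add: abs_minus_commute)
  next
    case equal then show ?thesis by simp
  next
    case greater then show ?thesis using key[OF greater] by simp
  qed
qed

lemma act_lip: "\<bar>act \<rho> a - act \<rho> b\<bar> \<le> \<bar>a - b\<bar>"
  using lipschitz_deriv[of "act \<rho>" "d1 \<rho>" 1, OF DERIV_act d1_bound] by simp
lemma d1_lip: "\<bar>d1 \<rho> a - d1 \<rho> b\<bar> \<le> c2 \<rho> * \<bar>a - b\<bar>"
  using lipschitz_deriv[of "d1 \<rho>" "d2 \<rho>", OF DERIV_d1 d2_bound] by simp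
lemma d2_lip: "\<bar>d2 \<rho> a - d2 \<rho> b\<bar> \<le> c3 \<rho> * \<bar>a - b\<bar>"
  using lipschitz_deriv[of "d2 \<rho>" "d3 \<rho>", OF DERIV_d2 d3_bound] by simp


definition zs :: "activation \<Rightarrow> (nat \<Rightarrow> nat) \<Rightarrow> (nat \<Rightarrow> nat \<Rightarrow> nat \<Rightarrow> real)
    \<Rightarrow> (nat \<Rightarrow> nat \<Rightarrow> real) \<Rightarrow> (nat \<Rightarrow> real) \<Rightarrow> nat \<Rightarrow> nat \<Rightarrow> real" where
  "zs \<rho> n A b x l i = (\<Sum>j<n l. A (Suc l) i j * hidden \<rho> n A b x l j) + b (Suc l) i"

lemma hidden_Suc': "hidden \<rho> n A b x (Suc l) i = act \<rho> (zs \<rho> n A b x l i)"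
  by (simp add: zs_def)

fun hd1 :: "activation \<Rightarrow> (nat \<Rightarrow> nat) \<Rightarrow> (nat \<Rightarrow> nat \<Rightarrow> nat \<Rightarrow> real)
    \<Rightarrow> (nat \<Rightarrow> nat \<Rightarrow> real) \<Rightarrow> (nat \<Rightarrow> real) \<Rightarrow> nat \<Rightarrow> nat \<Rightarrow> nat \<Rightarrow> real" where
  "hd1 \<rho> n A b x p 0 j = (if j = p then 1 else 0)"
| "hd1 \<rho> n A b x p (Suc l) i = d1 \<rho> (zs \<rho> n A b x l i) * (\<Sum>j<n l. A (Suc l) i j * hd1 \<rho> n A b x p l j)"

fun hd2 :: "activation \<Rightarrow> (nat \<Rightarrow> nat) \<Rightarrow> (nat \<Rightarrow> nat \<Rightarrow> nat \<Rightarrow> real)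
    \<Rightarrow> (nat \<Rightarrow> nat \<Rightarrow> real) \<Rightarrow> (nat \<Rightarrow> real) \<Rightarrow> nat \<Rightarrow> nat \<Rightarrow> nat \<Rightarrow> real" where
  "hd2 \<rho> n A b x p 0 j = 0"
| "hd2 \<rho> n A b x p (Suc l) i = d2 \<rho> (zs \<rho> n A b x l i) * (\<Sum>j<n l. A (Suc l) i j * hd1 \<rho> n A b x p l j)^2
      + d1 \<rho> (zs \<rho> n A b x l i) * (\<Sum>j<n l. A (Suc l) i j * hd2 \<rho> n A b x p l j)"

lemma DERIV_hidden:
  "((\<lambda>t. hidden \<rho> n A b (x(p:=t)) l i) has_real_derivative hd1 \<rho> n A b (x(p:=s)) p l i) (at s)"
proof (induction l arbitrary: i)
  case 0
  show ?case
  proof (cases "i = p")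
    case True
    then show ?thesis by (simp add: DERIV_ident)
  next
    case False
    then show ?thesis by simp
  qed
next
  case (Suc l)
  have "((\<lambda>t. \<Sum>j<n l. A (Suc l) i j * hidden \<rho> n A b (x(p:=t)) l j) has_real_derivative
      (\<Sum>j<n l. A (Suc l) i j * hd1 \<rho> n A b (x(p:=s)) p l j)) (at s)"
    by (intro DERIV_sum DERIV_cmult Suc.IH)
  from DERIV_add[OF this DERIV_const[of "b (Suc l) i"]]
  have z: "((\<lambda>t. zs \<rho> n A b (x(p:=t)) l i) has_real_derivative
      (\<Sum>j<n l. A (Suc l) i j * hd1 \<rho> n A b (x(p:=s)) p l j)) (at s)"
    unfolding zs_def by simp
  show ?case unfolding hidden_Suc' hd1.simps
    by (rule DERIV_chain2[OF DERIV_act z])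
qed

lemma DERIV_zs:
  "((\<lambda>t. zs \<rho> n A b (x(p:=t)) l i) has_real_derivative
      (\<Sum>j<n l. A (Suc l) i j * hd1 \<rho> n A b (x(p:=s)) p l j)) (at s)"
proof -
  have "((\<lambda>t. \<Sum>j<n l. A (Suc l) i j * hidden \<rho> n A b (x(p:=t)) l j) has_real_derivative
      (\<Sum>j<n l. A (Suc l) i j * hd1 \<rho> n A b (x(p:=s)) p l j)) (at s)"
    by (intro DERIV_sum DERIV_cmult DERIV_hidden)
  from DERIV_add[OF this DERIV_const[of "b (Suc l) i"]]
  show ?thesis unfolding zs_def by simp
qed

lemma DERIV_hd1:
  "((\<lambda>t. hd1 \<rho> n A b (x(p:=t)) p l i) has_real_derivative hd2 \<rho> n A b (x(p:=s)) p l i) (at s)"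
proof (induction l arbitrary: i)
  case 0
  then show ?case by simp
next
  case (Suc l)
  have a: "((\<lambda>t. d1 \<rho> (zs \<rho> n A b (x(p:=t)) l i)) has_real_derivative
      d2 \<rho> (zs \<rho> n A b (x(p:=s)) l i) * (\<Sum>j<n l. A (Suc l) i j * hd1 \<rho> n A b (x(p:=s)) p l j)) (at s)"
    using DERIV_chain2[OF DERIV_d1 DERIV_zs] by simp
  have c: "((\<lambda>t. \<Sum>j<n l. A (Suc l) i j * hd1 \<rho> n A b (x(p:=t)) p l j) has_real_derivative
      (\<Sum>j<n l. A (Suc l) i j * hd2 \<rho> n A b (x(p:=s)) p l j)) (at s)"
    by (intro DERIV_sum DERIV_cmult Suc.IH)
  have e: "d2 \<rho> (zs \<rho> n A b (x(p:=s)) l i) * (\<Sum>j<n l. A (Suc l) i j * hd1 \<rho> n A b (x(p:=s)) p l j) *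
      (\<Sum>j<n l. A (Suc l) i j * hd1 \<rho> n A b (x(p:=s)) p l j) +
      (\<Sum>j<n l. A (Suc l) i j * hd2 \<rho> n A b (x(p:=s)) p l j) * d1 \<rho> (zs \<rho> n A b (x(p:=s)) l i)
    = hd2 \<rho> n A b (x(p:=s)) p (Suc l) i"
    by (simp only: hd2.simps power2_eq_square algebra_simps)
  show ?case unfolding hd1.simps e[symmetric] by (rule DERIV_mult[OF a c])
qed

lemma deriv_net2:
  "deriv (deriv (\<lambda>t. net \<rho> L n A b (x(p := t)))) (x p)
     = (\<Sum>j<n (L - 1). A L 0 j * hd2 \<rho> n A b x p (L - 1) j)"
proof -
  have d1e: "deriv (\<lambda>t. net \<rho> L n A b (x(p := t))) =
      (\<lambda>s. \<Sum>j<n (L - 1). A L 0 j * hd1 \<rho> n A b (x(p:=s)) p (L - 1) j)"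
  proof
    fix s
    have "((\<lambda>t. net \<rho> L n A b (x(p := t))) has_real_derivative
      (\<Sum>j<n (L - 1). A L 0 j * hd1 \<rho> n A b (x(p:=s)) p (L - 1) j)) (at s)"
    proof -
      have "((\<lambda>t. \<Sum>j<n (L - 1). A L 0 j * hidden \<rho> n A b (x(p:=t)) (L - 1) j) has_real_derivative
        (\<Sum>j<n (L - 1). A L 0 j * hd1 \<rho> n A b (x(p:=s)) p (L - 1) j)) (at s)"
        by (intro DERIV_sum DERIV_cmult DERIV_hidden)
      from DERIV_add[OF this DERIV_const[of "b L 0"]]
      show ?thesis unfolding net_def by simp
    qed
    then show "deriv (\<lambda>t. net \<rho> L n A b (x(p := t))) s =
      (\<Sum>j<n (L - 1). A L 0 j * hd1 \<rho> n A b (x(p:=s)) p (L - 1) j)"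
      by (rule DERIV_imp_deriv)
  qed
  have "((\<lambda>s. \<Sum>j<n (L - 1). A L 0 j * hd1 \<rho> n A b (x(p:=s)) p (L - 1) j) has_real_derivative
     (\<Sum>j<n (L - 1). A L 0 j * hd2 \<rho> n A b (x(p:=x p)) p (L - 1) j)) (at (x p))"
    by (intro DERIV_sum DERIV_cmult DERIV_hd1)
  then show ?thesis unfolding d1e by (simp add: DERIV_imp_deriv)
qed


lemma sum_prod_bound:
  fixes a u :: "nat \<Rightarrow> real"
  assumes "\<forall>j<m. \<bar>a j\<bar> \<le> R" "\<forall>j<m. \<bar>u j\<bar> \<le> B"
  shows "\<bar>\<Sum>j<m. a j * u j\<bar> \<le> real m * R * B"
proof -
  have "\<bar>\<Sum>j<m. a j * u j\<bar> \<le> (\<Sum>j<m. \<bar>a j * u j\<bar>)" by (rule sum_abs)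
  also have "\<dots> \<le> (\<Sum>j<m. R * B)"
  proof (rule sum_mono)
    fix j assume "j \<in> {..<m}"
    then have "\<bar>a j\<bar> \<le> R" "\<bar>u j\<bar> \<le> B" using assms by auto
    then show "\<bar>a j * u j\<bar> \<le> R * B" unfolding abs_mult
      by (intro mult_mono) auto
  qed
  finally show ?thesis by simp
qed

lemma sum_prod_diff:
  fixes a a' u u' :: "nat \<Rightarrow> real"
  assumes "\<forall>j<m. \<bar>a j\<bar> \<le> R" "\<forall>j<m. \<bar>u' j\<bar> \<le> B" "\<forall>j<m. \<bar>u j - u' j\<bar> \<le> E"
  shows "\<bar>(\<Sum>j<m. a j * u j) - (\<Sum>j<m. a' j * u' j)\<bar>
           \<le> (\<Sum>j<m. \<bar>a j - a' j\<bar>) * B + real m * R * E"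
proof -
  have eq: "(\<Sum>j<m. a j * u j) - (\<Sum>j<m. a' j * u' j)
      = (\<Sum>j<m. (a j - a' j) * u' j) + (\<Sum>j<m. a j * (u j - u' j))"
    by (simp add: sum_subtractf[symmetric] sum.distrib[symmetric] algebra_simps)
  have 1: "\<bar>\<Sum>j<m. (a j - a' j) * u' j\<bar> \<le> (\<Sum>j<m. \<bar>a j - a' j\<bar>) * B"
  proof -
    have "\<bar>\<Sum>j<m. (a j - a' j) * u' j\<bar> \<le> (\<Sum>j<m. \<bar>(a j - a' j) * u' j\<bar>)" by (rule sum_abs)
    also have "\<dots> \<le> (\<Sum>j<m. \<bar>a j - a' j\<bar> * B)"
      using assms(2) by (intro sum_mono) (auto simp: abs_mult intro: mult_left_mono)
    finally show ?thesis by (simp add: sum_distrib_right)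
  qed
  have 2: "\<bar>\<Sum>j<m. a j * (u j - u' j)\<bar> \<le> real m * R * E"
    using assms(1,3) by (intro sum_prod_bound) auto
  show ?thesis unfolding eq using 1 2 by linarith
qed

lemma comb1:
  assumes "\<bar>z - z'\<bar> \<le> ez" "\<bar>z1\<bar> \<le> B1" "\<bar>z1 - z1'\<bar> \<le> e1"
  shows "\<bar>d1 \<rho> z * z1 - d1 \<rho> z' * z1'\<bar> \<le> c2 \<rho> * ez * B1 + e1"
proof -
  have eq: "d1 \<rho> z * z1 - d1 \<rho> z' * z1' = (d1 \<rho> z - d1 \<rho> z') * z1 + d1 \<rho> z' * (z1 - z1')"
    by (simp add: algebra_simps)
  have 1: "\<bar>(d1 \<rho> z - d1 \<rho> z') * z1\<bar> \<le> c2 \<rho> * ez * B1"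
  proof -
    have "\<bar>d1 \<rho> z - d1 \<rho> z'\<bar> \<le> c2 \<rho> * ez"
      using d1_lip[of \<rho> z z'] assms(1) c2_nonneg[of \<rho>] by (meson mult_left_mono order_trans)
    then show ?thesis unfolding abs_mult using assms(2) by (intro mult_mono) auto
  qed
  have 2: "\<bar>d1 \<rho> z' * (z1 - z1')\<bar> \<le> 1 * e1"
    unfolding abs_mult using d1_bound[of \<rho> z'] assms(3) by (intro mult_mono) auto
  show ?thesis unfolding eq using 1 2 abs_triangle_ineq[of "(d1 \<rho> z - d1 \<rho> z') * z1" "d1 \<rho> z' * (z1 - z1')"]
    by linarith
qed

lemma comb2:
  assumes "\<bar>z - z'\<bar> \<le> ez" "\<bar>z1\<bar> \<le> B1" "\<bar>z1'\<bar> \<le> B1" "\<bar>z1 - z1'\<bar> \<le> e1"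
    "\<bar>z2\<bar> \<le> B2" "\<bar>z2 - z2'\<bar> \<le> e2"
  shows "\<bar>(d2 \<rho> z * z1^2 + d1 \<rho> z * z2) - (d2 \<rho> z' * z1'^2 + d1 \<rho> z' * z2')\<bar>
     \<le> c3 \<rho> * ez * B1^2 + c2 \<rho> * e1 * (2 * B1) + c2 \<rho> * ez * B2 + e2"
proof -
  have eq: "(d2 \<rho> z * z1^2 + d1 \<rho> z * z2) - (d2 \<rho> z' * z1'^2 + d1 \<rho> z' * z2')
    = (d2 \<rho> z - d2 \<rho> z') * z1^2 + d2 \<rho> z' * ((z1 - z1') * (z1 + z1'))
      + (d1 \<rho> z - d1 \<rho> z') * z2 + d1 \<rho> z' * (z2 - z2')"
    by (simp add: algebra_simps power2_eq_square)
  have c2n: "0 \<le> c2 \<rho>" "0 \<le> c3 \<rho>" using c2_nonneg c3_nonneg by auto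
  have ez: "0 \<le> ez" using assms(1) by linarith
  have B1: "0 \<le> B1" using assms(2) by linarith
  have 1: "\<bar>(d2 \<rho> z - d2 \<rho> z') * z1^2\<bar> \<le> c3 \<rho> * ez * B1^2"
  proof -
    have "\<bar>d2 \<rho> z - d2 \<rho> z'\<bar> \<le> c3 \<rho> * ez"
      using d2_lip[of \<rho> z z'] assms(1) c2n by (meson mult_left_mono order_trans)
    moreover have "\<bar>z1^2\<bar> \<le> B1^2" using power_mono[OF assms(2) abs_ge_zero, of 2] by simp
    ultimately show ?thesis unfolding abs_mult by (intro mult_mono) auto
  qed
  have 2: "\<bar>d2 \<rho> z' * ((z1 - z1') * (z1 + z1'))\<bar> \<le> c2 \<rho> * (e1 * (2 * B1))"
  proof -
    have "\<bar>z1 + z1'\<bar> \<le> 2 * B1" using assms(2,3) by linarith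
    then have "\<bar>(z1 - z1') * (z1 + z1')\<bar> \<le> e1 * (2 * B1)" unfolding abs_mult
      using assms(4) by (intro mult_mono) auto
    then show ?thesis unfolding abs_mult[of "d2 \<rho> z'"] using d2_bound[of \<rho> z']
      by (intro mult_mono) auto
  qed
  have 3: "\<bar>(d1 \<rho> z - d1 \<rho> z') * z2\<bar> \<le> c2 \<rho> * ez * B2"
  proof -
    have "\<bar>d1 \<rho> z - d1 \<rho> z'\<bar> \<le> c2 \<rho> * ez"
      using d1_lip[of \<rho> z z'] assms(1) c2n by (meson mult_left_mono order_trans)
    then show ?thesis unfolding abs_mult using assms(5) by (intro mult_mono) auto
  qed
  have 4: "\<bar>d1 \<rho> z' * (z2 - z2')\<bar> \<le> 1 * e2"
    unfolding abs_mult using d1_bound[of \<rho> z'] assms(6) by (intro mult_mono) auto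
  have t: "\<bar>a + b + c + d\<bar> \<le> \<bar>a\<bar> + \<bar>b\<bar> + \<bar>c\<bar> + \<bar>d\<bar>" for a b c d :: real by linarith
  have c2e: "c2 \<rho> * (e1 * (2 * B1)) = c2 \<rho> * e1 * (2 * B1)" by simp
  show ?thesis unfolding eq using t[of "(d2 \<rho> z - d2 \<rho> z') * z1^2" "d2 \<rho> z' * ((z1 - z1') * (z1 + z1'))"
      "(d1 \<rho> z - d1 \<rho> z') * z2" "d1 \<rho> z' * (z2 - z2')"] 1 2 3 4 unfolding c2e by linarith
qed

lemma comb3:
  assumes "\<bar>z1\<bar> \<le> B1" "\<bar>z2\<bar> \<le> B2"
  shows "\<bar>d2 \<rho> z * z1^2 + d1 \<rho> z * z2\<bar> \<le> B1^2 + B2"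
proof -
  have "\<bar>z1^2\<bar> \<le> B1^2" using power_mono[OF assms(1) abs_ge_zero, of 2] by simp
  then have 1: "\<bar>d2 \<rho> z * z1^2\<bar> \<le> 1 * B1^2" unfolding abs_mult
    using d2_bound[of \<rho> z] c2_le1[of \<rho>] by (intro mult_mono) auto
  have 2: "\<bar>d1 \<rho> z * z2\<bar> \<le> 1 * B2" unfolding abs_mult
    using d1_bound[of \<rho> z] assms(2) by (intro mult_mono) auto
  show ?thesis using 1 2 abs_triangle_ineq[of "d2 \<rho> z * z1^2" "d1 \<rho> z * z2"] by linarith
qed

lemma cs2:
  fixes a b n m A B :: real
  assumes "0 \<le> a" "0 \<le> b" "0 \<le> n" "0 \<le> m" "0 \<le> A" "0 \<le> B" "a^2 \<le> n * A" "b^2 \<le> m * B"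
  shows "(a + b)^2 \<le> (n + m) * (A + B)"
proof -
  have "(2*a*b)^2 = 4 * a^2 * b^2" by (simp add: power_mult_distrib)
  also have "\<dots> \<le> 4 * (n * A) * (m * B)"
  proof -
    have "a^2 * b^2 \<le> (n * A) * (m * B)"
      using assms by (intro mult_mono) auto
    then show ?thesis by simp
  qed
  also have "\<dots> \<le> (n * B + m * A)^2"
  proof -
    have "0 \<le> (n * B - m * A)^2" by simp
    then show ?thesis by (simp add: power2_eq_square algebra_simps)
  qed
  finally have sq: "(2*a*b)^2 \<le> (n * B + m * A)^2" .
  have "0 \<le> n * B + m * A" using assms by simp
  then have "2*a*b \<le> n * B + m * A" using sq by (rule power2_le_imp_le[rotated])
  then show ?thesis using assms(7,8) by (simp add: power2_eq_square algebra_simps)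
qed

lemma cs_sum:
  fixes f c g :: "'a \<Rightarrow> real"
  assumes "finite I" "\<And>i. i \<in> I \<Longrightarrow> 0 \<le> f i \<and> 0 \<le> c i \<and> 0 \<le> g i \<and> (f i)^2 \<le> c i * g i"
  shows "(\<Sum>i\<in>I. f i)^2 \<le> (\<Sum>i\<in>I. c i) * (\<Sum>i\<in>I. g i)"
  using assms
proof (induction I rule: finite_induct)
  case empty then show ?case by simp
next
  case (insert x F)
  have h: "(\<Sum>i\<in>F. f i)^2 \<le> (\<Sum>i\<in>F. c i) * (\<Sum>i\<in>F. g i)" using insert by auto
  have x: "0 \<le> f x \<and> 0 \<le> c x \<and> 0 \<le> g x \<and> (f x)^2 \<le> c x * g x" using insert by auto
  have nn: "0 \<le> (\<Sum>i\<in>F. f i)" "0 \<le> (\<Sum>i\<in>F. c i)" "0 \<le> (\<Sum>i\<in>F. g i)"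
    using insert.prems by (auto intro: sum_nonneg)
  show ?case using insert.hyps cs2[of "f x" "\<Sum>i\<in>F. f i" "c x" "\<Sum>i\<in>F. c i" "g x" "\<Sum>i\<in>F. g i"] x nn h
    by simp
qed


lemma pb_A: "params_bounded L n R A b \<Longrightarrow> 1 \<le> k \<Longrightarrow> k \<le> L \<Longrightarrow> i < n k \<Longrightarrow> j < n (k - 1)
   \<Longrightarrow> \<bar>A k i j\<bar> \<le> R"
  unfolding params_bounded_def by auto

lemma pb_b: "params_bounded L n R A b \<Longrightarrow> 1 \<le> k \<Longrightarrow> k \<le> L \<Longrightarrow> i < n k
   \<Longrightarrow> \<bar>b k i\<bar> \<le> R"
  unfolding params_bounded_def by auto

lemma piw_Suc: "piw n (Suc l) = piw n l * n (Suc l)"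
  unfolding piw_def by simp

lemma piw_ge1: "(\<forall>j\<le>l. 1 \<le> n j) \<Longrightarrow> 1 \<le> real (piw n l)"
proof (induction l)
  case 0 then show ?case by (simp add: piw_def)
next
  case (Suc l)
  then have "1 \<le> real (piw n l)" "1 \<le> real (n (Suc l))" by auto
  then have "1 * 1 \<le> real (piw n l) * real (n (Suc l))" by (intro mult_mono) auto
  then show ?case by (simp add: piw_Suc)
qed

lemmas pw = power_add power_mult power_mult_distrib algebra_simps eval_nat_numeral

lemma sum_delta_p: "(p::nat) < m \<Longrightarrow> (\<Sum>j<m. a j * (if j = p then 1 else 0)) = (a p :: real)"
proof -
  assume "p < m"
  have "(\<Sum>j<m. a j * (if j = p then 1 else 0)) = (\<Sum>j<m. if j = p then a p else 0)"
    by (rule sum.cong) auto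
  also have "\<dots> = a p" using \<open>p < m\<close> by (subst sum.delta) auto
  finally show ?thesis .
qed

lemma hd1_base: "p < n 0 \<Longrightarrow> hd1 \<rho> n A b x p (Suc 0) i = d1 \<rho> (zs \<rho> n A b x 0 i) * A 1 i p"
  by (simp add: sum_delta_p)

lemma hd2_base: "p < n 0 \<Longrightarrow> hd2 \<rho> n A b x p (Suc 0) i = d2 \<rho> (zs \<rho> n A b x 0 i) * (A 1 i p)^2 + d1 \<rho> (zs \<rho> n A b x 0 i) * 0"
  by (simp add: sum_delta_p)

lemma mag:
  assumes R: "R \<ge> 1" and pb: "params_bounded L n R A b" and nl: "\<forall>l\<le>L. 1 \<le> n l"
    and p: "p < n 0"
  shows "Suc l \<le> L \<Longrightarrow> \<forall>i<n (Suc l). \<bar>hd1 \<rho> n A b x p (Suc l) i\<bar> \<le> R^(Suc l) * real (piw n l)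
      \<and> \<bar>hd2 \<rho> n A b x p (Suc l) i\<bar> \<le> real (Suc l) * R^(2*l+2) * real (piw n l)^2"
proof (induction l)
  case 0
  show ?case
  proof (intro allI impI conjI)
    fix i assume i: "i < n (Suc 0)"
    have a: "\<bar>A 1 i p\<bar> \<le> R" using pb_A[OF pb, of 1 i p] 0 i p by auto
    have "\<bar>hd1 \<rho> n A b x p (Suc 0) i\<bar> \<le> 1 * R" unfolding hd1_base[where p=p and n=n, OF p] abs_mult
      using d1_bound a by (intro mult_mono) auto
    then show "\<bar>hd1 \<rho> n A b x p (Suc 0) i\<bar> \<le> R^(Suc 0) * real (piw n 0)" by (simp add: piw_def)
    have "\<bar>hd2 \<rho> n A b x p (Suc 0) i\<bar> \<le> R^2 + 0" unfolding hd2_base[where p=p and n=n, OF p]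
      by (rule comb3) (use a in auto)
    moreover have "real (Suc 0) * R^(2*0+2) * real (piw n 0)^2 = R^2" by (simp add: piw_def power2_eq_square)
    ultimately show "\<bar>hd2 \<rho> n A b x p (Suc 0) i\<bar> \<le> real (Suc 0) * R^(2*0+2) * real (piw n 0)^2"
      by linarith
  qed
next
  case (Suc l)
  then have IH: "\<forall>i<n (Suc l). \<bar>hd1 \<rho> n A b x p (Suc l) i\<bar> \<le> R^(Suc l) * real (piw n l)
      \<and> \<bar>hd2 \<rho> n A b x p (Suc l) i\<bar> \<le> real (Suc l) * R^(2*l+2) * real (piw n l)^2" by auto
  define m where "m = n (Suc l)"
  define Pp where "Pp = real (piw n l)"
  have Pk: "real (piw n (Suc l)) = real m * Pp" by (simp add: piw_Suc Pp_def m_def)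
  have m1: "1 \<le> real m" using nl Suc.prems by (auto simp: m_def)
  have P1: "1 \<le> Pp" unfolding Pp_def using nl Suc.prems by (intro piw_ge1) auto
  show ?case
  proof (intro allI impI conjI)
    fix i assume i: "i < n (Suc (Suc l))"
    have a: "\<forall>j<m. \<bar>A (Suc (Suc l)) i j\<bar> \<le> R" using pb_A[OF pb, of "Suc (Suc l)" i] Suc.prems i
      by (auto simp: m_def)
    define z1 where "z1 = (\<Sum>j<m. A (Suc (Suc l)) i j * hd1 \<rho> n A b x p (Suc l) j)"
    define z2 where "z2 = (\<Sum>j<m. A (Suc (Suc l)) i j * hd2 \<rho> n A b x p (Suc l) j)"
    have "\<bar>z1\<bar> \<le> real m * R * (R^(Suc l) * Pp)" unfolding z1_def
      using a IH by (intro sum_prod_bound) (auto simp: m_def Pp_def)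
    also have "\<dots> = R^(Suc (Suc l)) * real (piw n (Suc l))" unfolding Pk by (simp add: algebra_simps)
    finally have z1: "\<bar>z1\<bar> \<le> R^(Suc (Suc l)) * real (piw n (Suc l))" .
    have "\<bar>z2\<bar> \<le> real m * R * (real (Suc l) * R^(2*l+2) * Pp^2)" unfolding z2_def
      using a IH by (intro sum_prod_bound) (auto simp: m_def Pp_def)
    also have "\<dots> = real (Suc l) * R^(2*l+3) * (real m * Pp^2)" by (simp add: pw)
    also have "\<dots> \<le> real (Suc l) * R^(2*l+4) * (real m * Pp)^2"
    proof -
      have "R^(2*l+3) \<le> R^(2*l+4)" using R by (intro power_increasing) auto
      moreover have "real m * Pp^2 \<le> (real m * Pp)^2"
        using m1 P1 by (simp add: power2_eq_square mult_right_mono)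
      ultimately show ?thesis using R P1 m1 by (intro mult_mono) auto
    qed
    finally have z2: "\<bar>z2\<bar> \<le> real (Suc l) * R^(2*l+4) * real (piw n (Suc l))^2" unfolding Pk .
    show "\<bar>hd1 \<rho> n A b x p (Suc (Suc l)) i\<bar> \<le> R^(Suc (Suc l)) * real (piw n (Suc l))"
    proof -
      have "\<bar>hd1 \<rho> n A b x p (Suc (Suc l)) i\<bar> \<le> 1 * \<bar>z1\<bar>"
        unfolding hd1.simps(2)[of \<rho> n A b x p "Suc l" i] z1_def[symmetric] m_def[symmetric] abs_mult
        using d1_bound by (intro mult_right_mono) auto
      then show ?thesis using z1 by simp
    qed
    show "\<bar>hd2 \<rho> n A b x p (Suc (Suc l)) i\<bar> \<le> real (Suc (Suc l)) * R^(2*Suc l+2) * real (piw n (Suc l))^2"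
    proof -
      have "\<bar>hd2 \<rho> n A b x p (Suc (Suc l)) i\<bar> \<le> (R^(Suc (Suc l)) * real (piw n (Suc l)))^2
          + real (Suc l) * R^(2*l+4) * real (piw n (Suc l))^2"
        unfolding hd2.simps(2)[of \<rho> n A b x p "Suc l" i] z1_def[symmetric] z2_def[symmetric] m_def[symmetric]
        by (rule comb3[OF z1 z2])
      also have "\<dots> = real (Suc (Suc l)) * R^(2*Suc l+2) * real (piw n (Suc l))^2"
        by (simp add: pw)
      finally show ?thesis .
    qed
  qed
qed


definition Trow :: "(nat \<Rightarrow> nat) \<Rightarrow> (nat \<Rightarrow> nat \<Rightarrow> nat \<Rightarrow> real) \<Rightarrow> (nat \<Rightarrow> nat \<Rightarrow> nat \<Rightarrow> real)
   \<Rightarrow> (nat \<Rightarrow> nat \<Rightarrow> real) \<Rightarrow> (nat \<Rightarrow> nat \<Rightarrow> real) \<Rightarrow> nat \<Rightarrow> nat \<Rightarrow> real" where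
  "Trow n A A' b b' k i = (\<Sum>j<n (k - 1). \<bar>A k i j - A' k i j\<bar>) + \<bar>b k i - b' k i\<bar>"

definition Tl :: "(nat \<Rightarrow> nat) \<Rightarrow> (nat \<Rightarrow> nat \<Rightarrow> nat \<Rightarrow> real) \<Rightarrow> (nat \<Rightarrow> nat \<Rightarrow> nat \<Rightarrow> real)
   \<Rightarrow> (nat \<Rightarrow> nat \<Rightarrow> real) \<Rightarrow> (nat \<Rightarrow> nat \<Rightarrow> real) \<Rightarrow> nat \<Rightarrow> real" where
  "Tl n A A' b b' k = (\<Sum>i<n k. Trow n A A' b b' k i)"

definition Ul :: "(nat \<Rightarrow> nat) \<Rightarrow> (nat \<Rightarrow> nat \<Rightarrow> nat \<Rightarrow> real) \<Rightarrow> (nat \<Rightarrow> nat \<Rightarrow> nat \<Rightarrow> real)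
   \<Rightarrow> (nat \<Rightarrow> nat \<Rightarrow> real) \<Rightarrow> (nat \<Rightarrow> nat \<Rightarrow> real) \<Rightarrow> nat \<Rightarrow> real" where
  "Ul n A A' b b' l = (\<Sum>k=1..l. Tl n A A' b b' k)"

fun Kc :: "activation \<Rightarrow> nat \<Rightarrow> real" where
  "Kc \<rho> 0 = 0"
| "Kc \<rho> (Suc m) = Kc \<rho> m + real m + c3 \<rho> + c2 \<rho> * (5 * real m + 2)"

lemma Trow_nonneg: "0 \<le> Trow n A A' b b' k i"
  unfolding Trow_def by (intro add_nonneg_nonneg sum_nonneg) auto

lemma Tl_nonneg: "0 \<le> Tl n A A' b b' k"
  unfolding Tl_def by (intro sum_nonneg Trow_nonneg)

lemma Ul_nonneg: "0 \<le> Ul n A A' b b' k"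
  unfolding Ul_def by (intro sum_nonneg Tl_nonneg)

lemma Ul_Suc: "Ul n A A' b b' (Suc l) = Ul n A A' b b' l + Tl n A A' b b' (Suc l)"
  unfolding Ul_def by simp

lemma Trow_le: "i < n k \<Longrightarrow> Trow n A A' b b' k i \<le> Tl n A A' b b' k"
  unfolding Tl_def by (rule member_le_sum) (auto intro: Trow_nonneg)

lemma rowA_le: "(\<Sum>j<n l. \<bar>A (Suc l) i j - A' (Suc l) i j\<bar>) \<le> Trow n A A' b b' (Suc l) i"
  unfolding Trow_def by simp

lemma Kc_nonneg: "0 \<le> Kc \<rho> m"
  by (induction m) (auto intro!: add_nonneg_nonneg c3_nonneg mult_nonneg_nonneg c2_nonneg)

lemma sum_diff_row:
  assumes "\<forall>j<n l. \<bar>A (Suc l) i j\<bar> \<le> R" "\<forall>j<n l. \<bar>u' j\<bar> \<le> B" "\<forall>j<n l. \<bar>u j - u' j\<bar> \<le> E"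
    "0 \<le> B"
  shows "\<bar>(\<Sum>j<n l. A (Suc l) i j * u j) - (\<Sum>j<n l. A' (Suc l) i j * u' j)\<bar>
     \<le> Trow n A A' b b' (Suc l) i * B + real (n l) * R * E"
proof -
  have "\<bar>(\<Sum>j<n l. A (Suc l) i j * u j) - (\<Sum>j<n l. A' (Suc l) i j * u' j)\<bar>
     \<le> (\<Sum>j<n l. \<bar>A (Suc l) i j - A' (Suc l) i j\<bar>) * B + real (n l) * R * E"
    by (rule sum_prod_diff) (use assms in auto)
  also have "\<dots> \<le> Trow n A A' b b' (Suc l) i * B + real (n l) * R * E"
    using rowA_le assms(4) by (intro add_right_mono mult_right_mono) auto
  finally show ?thesis .
qed

lemma zs_diff:
  assumes "\<forall>j<n l. \<bar>A (Suc l) i j\<bar> \<le> R" "\<forall>j<n l. \<bar>hidden \<rho> n A' b' x l j\<bar> \<le> 1"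
    "\<forall>j<n l. \<bar>hidden \<rho> n A b x l j - hidden \<rho> n A' b' x l j\<bar> \<le> E"
  shows "\<bar>zs \<rho> n A b x l i - zs \<rho> n A' b' x l i\<bar> \<le> Trow n A A' b b' (Suc l) i + real (n l) * R * E"
proof -
  have "\<bar>(\<Sum>j<n l. A (Suc l) i j * hidden \<rho> n A b x l j) - (\<Sum>j<n l. A' (Suc l) i j * hidden \<rho> n A' b' x l j)\<bar>
     \<le> (\<Sum>j<n l. \<bar>A (Suc l) i j - A' (Suc l) i j\<bar>) * 1 + real (n l) * R * E"
    by (rule sum_prod_diff) (use assms in auto)
  moreover have "zs \<rho> n A b x l i - zs \<rho> n A' b' x l i =
     ((\<Sum>j<n l. A (Suc l) i j * hidden \<rho> n A b x l j) - (\<Sum>j<n l. A' (Suc l) i j * hidden \<rho> n A' b' x l j))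
     + (b (Suc l) i - b' (Suc l) i)" unfolding zs_def by simp
  ultimately show ?thesis unfolding Trow_def
    using abs_triangle_ineq[of "(\<Sum>j<n l. A (Suc l) i j * hidden \<rho> n A b x l j) - (\<Sum>j<n l. A' (Suc l) i j * hidden \<rho> n A' b' x l j)"
       "b (Suc l) i - b' (Suc l) i"] by simp
qed


lemma lin_comb:
  fixes X T U c d e :: real
  assumes "0 \<le> X" "0 \<le> T" "0 \<le> U" "d \<le> e" "c \<le> e"
  shows "d * (X * T) + c * (X * U) \<le> e * (X * (U + T))"
proof -
  have "d * (X * T) \<le> e * (X * T)" using assms by (intro mult_right_mono) auto
  moreover have "c * (X * U) \<le> e * (X * U)" using assms by (intro mult_right_mono) auto
  ultimately show ?thesis by (simp add: algebra_simps)
qed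

lemma diff_layers:
  assumes R: "R \<ge> 1" and pb: "params_bounded L n R A b" and pb': "params_bounded L n R A' b'"
    and nl: "\<forall>l\<le>L. 1 \<le> n l" and p: "p < n 0" and xb: "\<forall>j<n 0. \<bar>x j\<bar> \<le> 1"
  shows "Suc l \<le> L \<Longrightarrow> \<forall>i<n (Suc l).
      \<bar>hidden \<rho> n A b x (Suc l) i - hidden \<rho> n A' b' x (Suc l) i\<bar>
          \<le> R^l * real (piw n l) * Ul n A A' b b' (Suc l)
    \<and> \<bar>hd1 \<rho> n A b x p (Suc l) i - hd1 \<rho> n A' b' x p (Suc l) i\<bar>
          \<le> 2 * real (Suc l) * R^(2*l+1) * real (piw n l)^2 * Ul n A A' b b' (Suc l)
    \<and> \<bar>hd2 \<rho> n A b x p (Suc l) i - hd2 \<rho> n A' b' x p (Suc l) i\<bar>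
          \<le> Kc \<rho> (Suc l) * R^(3*l+2) * real (piw n l)^3 * Ul n A A' b b' (Suc l)"
proof (induction l)
  case 0
  define U1 where "U1 = Ul n A A' b b' 1"
  have c2: "0 \<le> c2 \<rho>" "c2 \<rho> \<le> 1" "0 \<le> c3 \<rho>" using c2_nonneg c2_le1 c3_nonneg by auto
  have U1: "0 \<le> U1" unfolding U1_def by (rule Ul_nonneg)
  show ?case
  proof (intro allI impI conjI)
    fix i assume i: "i < n (Suc 0)"
    have a: "\<forall>j<n 0. \<bar>A (Suc 0) i j\<bar> \<le> R" using pb_A[OF pb, of 1 i] 0 i by auto
    have a': "\<bar>A' 1 i p\<bar> \<le> R" "\<bar>A 1 i p\<bar> \<le> R" using pb_A[OF pb', of 1 i p] pb_A[OF pb, of 1 i p] 0 i p by auto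
    have rowU: "Trow n A A' b b' 1 i \<le> U1"
      unfolding U1_def Ul_def using Trow_le[where n=n and k="Suc 0", OF i] by simp
    have dz: "\<bar>zs \<rho> n A b x 0 i - zs \<rho> n A' b' x 0 i\<bar> \<le> U1"
    proof -
      have "\<bar>zs \<rho> n A b x 0 i - zs \<rho> n A' b' x 0 i\<bar> \<le> Trow n A A' b b' (Suc 0) i + real (n 0) * R * 0"
        by (rule zs_diff) (use a xb in auto)
      then show ?thesis using rowU by simp
    qed
    have dz1: "\<bar>A 1 i p - A' 1 i p\<bar> \<le> U1"
    proof -
      have "\<bar>A (Suc 0) i p - A' (Suc 0) i p\<bar> \<le> (\<Sum>j<n 0. \<bar>A (Suc 0) i j - A' (Suc 0) i j\<bar>)"
        using p by (intro member_le_sum[where f="\<lambda>j. \<bar>A (Suc 0) i j - A' (Suc 0) i j\<bar>"]) auto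
      then have "\<bar>A 1 i p - A' 1 i p\<bar> \<le> (\<Sum>j<n 0. \<bar>A (Suc 0) i j - A' (Suc 0) i j\<bar>)" by simp
      also have "\<dots> \<le> Trow n A A' b b' (Suc 0) i" by (rule rowA_le)
      finally show ?thesis using rowU by simp
    qed
    show "\<bar>hidden \<rho> n A b x (Suc 0) i - hidden \<rho> n A' b' x (Suc 0) i\<bar>
          \<le> R^0 * real (piw n 0) * Ul n A A' b b' (Suc 0)"
      unfolding hidden_Suc' using order_trans[OF act_lip dz] by (simp add: piw_def U1_def)
    show "\<bar>hd1 \<rho> n A b x p (Suc 0) i - hd1 \<rho> n A' b' x p (Suc 0) i\<bar>
          \<le> 2 * real (Suc 0) * R^(2*0+1) * real (piw n 0)^2 * Ul n A A' b b' (Suc 0)"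
    proof -
      have "\<bar>hd1 \<rho> n A b x p (Suc 0) i - hd1 \<rho> n A' b' x p (Suc 0) i\<bar> \<le> c2 \<rho> * U1 * R + U1"
        unfolding hd1_base[where p=p and n=n, OF p] by (rule comb1[OF dz a'(2) dz1])
      also have "\<dots> \<le> 1 * U1 * R + R * U1"
      proof -
        have "c2 \<rho> * U1 \<le> 1 * U1" using c2 U1 by (intro mult_right_mono) auto
        then have "c2 \<rho> * U1 * R \<le> 1 * U1 * R" using R c2 U1 by (intro mult_right_mono) auto
        moreover have "U1 \<le> R * U1" using mult_right_mono[OF R U1] by simp
        ultimately show ?thesis by linarith
      qed
      finally show ?thesis by (simp add: piw_def U1_def)
    qed
    show "\<bar>hd2 \<rho> n A b x p (Suc 0) i - hd2 \<rho> n A' b' x p (Suc 0) i\<bar>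
          \<le> Kc \<rho> (Suc 0) * R^(3*0+2) * real (piw n 0)^3 * Ul n A A' b b' (Suc 0)"
    proof -
      have "\<bar>hd2 \<rho> n A b x p (Suc 0) i - hd2 \<rho> n A' b' x p (Suc 0) i\<bar>
         \<le> c3 \<rho> * U1 * R^2 + c2 \<rho> * U1 * (2 * R) + c2 \<rho> * U1 * 0 + 0"
        unfolding hd2_base[where p=p and n=n, OF p] by (rule comb2[OF dz a'(2) a'(1) dz1]) auto
      also have "\<dots> \<le> c3 \<rho> * U1 * R^2 + c2 \<rho> * U1 * (2 * R^2)"
      proof -
        have "R \<le> R^2" using R by (simp add: power2_eq_square)
        then have "c2 \<rho> * U1 * (2 * R) \<le> c2 \<rho> * U1 * (2 * R^2)" using c2 U1
          by (intro mult_left_mono) auto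
        then show ?thesis by simp
      qed
      also have "\<dots> = Kc \<rho> (Suc 0) * R^(3*0+2) * real (piw n 0)^3 * Ul n A A' b b' (Suc 0)"
        by (simp add: piw_def U1_def algebra_simps power2_eq_square)
      finally show ?thesis .
    qed
  qed
next
  case (Suc l)
  have L: "Suc (Suc l) \<le> L" by fact
  have IH: "\<forall>i<n (Suc l).
      \<bar>hidden \<rho> n A b x (Suc l) i - hidden \<rho> n A' b' x (Suc l) i\<bar>
          \<le> R^l * real (piw n l) * Ul n A A' b b' (Suc l)
    \<and> \<bar>hd1 \<rho> n A b x p (Suc l) i - hd1 \<rho> n A' b' x p (Suc l) i\<bar>
          \<le> 2 * real (Suc l) * R^(2*l+1) * real (piw n l)^2 * Ul n A A' b b' (Suc l)
    \<and> \<bar>hd2 \<rho> n A b x p (Suc l) i - hd2 \<rho> n A' b' x p (Suc l) i\<bar>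
          \<le> Kc \<rho> (Suc l) * R^(3*l+2) * real (piw n l)^3 * Ul n A A' b b' (Suc l)"
    using Suc by auto
  define m where "m = n (Suc l)"
  define Pp where "Pp = real (piw n l)"
  define PK where "PK = real (piw n (Suc l))"
  have Pk: "PK = real m * Pp" by (simp add: PK_def Pp_def m_def piw_Suc)
  have m1: "1 \<le> real m" using nl L by (auto simp: m_def)
  have P1: "1 \<le> Pp" unfolding Pp_def using nl L by (intro piw_ge1) auto
  have PK1: "1 \<le> PK" unfolding PK_def using nl L by (intro piw_ge1) auto
  have PpPK: "Pp \<le> PK" unfolding Pk using m1 P1 by (simp add: mult_right_mono[of 1 "real m" Pp, simplified])
  define U1 where "U1 = Ul n A A' b b' (Suc l)"
  define Tk where "Tk = Tl n A A' b b' (Suc (Suc l))"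
  define U2 where "U2 = Ul n A A' b b' (Suc (Suc l))"
  have U2: "U2 = U1 + Tk" unfolding U2_def U1_def Tk_def by (rule Ul_Suc)
  have U1nn: "0 \<le> U1" unfolding U1_def by (rule Ul_nonneg)
  have Tknn: "0 \<le> Tk" unfolding Tk_def by (rule Tl_nonneg)
  define K1 where "K1 = Kc \<rho> (Suc l)"
  have K1nn: "0 \<le> K1" unfolding K1_def by (rule Kc_nonneg)
  have c2: "0 \<le> c2 \<rho>" "c2 \<rho> \<le> 1" "0 \<le> c3 \<rho>" using c2_nonneg c2_le1 c3_nonneg by auto
  have R0: "0 \<le> R" using R by simp
  have Rpow: "R^a \<le> R^b" if "a \<le> b" for a b using R that by (intro power_increasing) auto
  have Rpow1: "1 \<le> R^a" for a using R by (simp add: one_le_power)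
  have magA: "\<forall>j<m. \<bar>hd1 \<rho> n A b x p (Suc l) j\<bar> \<le> R^(Suc l) * Pp
      \<and> \<bar>hd2 \<rho> n A b x p (Suc l) j\<bar> \<le> real (Suc l) * R^(2*l+2) * Pp^2"
    using mag[OF R pb nl p, of l \<rho> x] L by (auto simp: m_def Pp_def)
  have magA': "\<forall>j<m. \<bar>hd1 \<rho> n A' b' x p (Suc l) j\<bar> \<le> R^(Suc l) * Pp
      \<and> \<bar>hd2 \<rho> n A' b' x p (Suc l) j\<bar> \<le> real (Suc l) * R^(2*l+2) * Pp^2"
    using mag[OF R pb' nl p, of l \<rho> x] L by (auto simp: m_def Pp_def)
  have hA': "\<forall>j<m. \<bar>hidden \<rho> n A' b' x (Suc l) j\<bar> \<le> 1"
    unfolding hidden_Suc' using act_bound by auto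
  show ?case
  proof (intro allI impI conjI)
    fix i assume i: "i < n (Suc (Suc l))"
    have a: "\<forall>j<m. \<bar>A (Suc (Suc l)) i j\<bar> \<le> R" using pb_A[OF pb, of "Suc (Suc l)" i] L i
      by (auto simp: m_def)
    have a': "\<forall>j<m. \<bar>A' (Suc (Suc l)) i j\<bar> \<le> R" using pb_A[OF pb', of "Suc (Suc l)" i] L i
      by (auto simp: m_def)
    have row: "Trow n A A' b b' (Suc (Suc l)) i \<le> Tk"
      unfolding Tk_def using Trow_le[where n=n and k="Suc (Suc l)", OF i] .
    have rownn: "0 \<le> Trow n A A' b b' (Suc (Suc l)) i" by (rule Trow_nonneg)
    define z where "z = zs \<rho> n A b x (Suc l) i"
    define z' where "z' = zs \<rho> n A' b' x (Suc l) i"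
    define z1 where "z1 = (\<Sum>j<m. A (Suc (Suc l)) i j * hd1 \<rho> n A b x p (Suc l) j)"
    define z1' where "z1' = (\<Sum>j<m. A' (Suc (Suc l)) i j * hd1 \<rho> n A' b' x p (Suc l) j)"
    define z2 where "z2 = (\<Sum>j<m. A (Suc (Suc l)) i j * hd2 \<rho> n A b x p (Suc l) j)"
    define z2' where "z2' = (\<Sum>j<m. A' (Suc (Suc l)) i j * hd2 \<rho> n A' b' x p (Suc l) j)"
    have hz: "\<bar>z - z'\<bar> \<le> R^(Suc l) * PK * U2"
    proof -
      have "\<bar>z - z'\<bar> \<le> Trow n A A' b b' (Suc (Suc l)) i + real m * R * (R^l * Pp * U1)"
        unfolding z_def z'_def m_def by (rule zs_diff) (use a hA' IH in \<open>auto simp: m_def Pp_def U1_def\<close>)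
      also have "\<dots> \<le> 1 * ((R^(Suc l) * PK) * Tk) + 1 * ((R^(Suc l) * PK) * U1)"
      proof -
        have "1 \<le> R^(Suc l) * PK" using Rpow1[of "Suc l"] PK1 by (metis mult_mono' mult_1 zero_le_one)
        then have "Tk \<le> (R^(Suc l) * PK) * Tk" using Tknn by (simp add: mult_right_mono[of 1 _ Tk, simplified])
        moreover have "real m * R * (R^l * Pp * U1) = (R^(Suc l) * PK) * U1" unfolding Pk by (simp add: pw)
        ultimately show ?thesis unfolding mult_1 using row by linarith
      qed
      also have "\<dots> \<le> 1 * ((R^(Suc l) * PK) * (U1 + Tk))"
        using Tknn U1nn PK1 R0 by (intro lin_comb) auto
      finally show ?thesis unfolding U2 by simp
    qed
    have hz1: "\<bar>z1\<bar> \<le> R^(Suc (Suc l)) * PK"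
    proof -
      have "\<bar>z1\<bar> \<le> real m * R * (R^(Suc l) * Pp)" unfolding z1_def
        using a magA by (intro sum_prod_bound) auto
      also have "\<dots> = R^(Suc (Suc l)) * PK" unfolding Pk by (simp add: pw)
      finally show ?thesis .
    qed
    have hz1': "\<bar>z1'\<bar> \<le> R^(Suc (Suc l)) * PK"
    proof -
      have "\<bar>z1'\<bar> \<le> real m * R * (R^(Suc l) * Pp)" unfolding z1'_def
        using a' magA' by (intro sum_prod_bound) auto
      also have "\<dots> = R^(Suc (Suc l)) * PK" unfolding Pk by (simp add: pw)
      finally show ?thesis .
    qed
    have hz2: "\<bar>z2\<bar> \<le> real (Suc l) * R^(2*l+4) * PK^2"
    proof -
      have "\<bar>z2\<bar> \<le> real m * R * (real (Suc l) * R^(2*l+2) * Pp^2)" unfolding z2_def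
        using a magA by (intro sum_prod_bound) auto
      also have "\<dots> = real (Suc l) * R^(2*l+3) * (real m * Pp^2)" by (simp add: pw)
      also have "\<dots> \<le> real (Suc l) * R^(2*l+4) * (real m * Pp)^2"
      proof -
        have "R^(2*l+3) \<le> R^(2*l+4)" by (rule Rpow) auto
        moreover have "real m * Pp^2 \<le> (real m * Pp)^2"
          using m1 P1 by (simp add: power2_eq_square mult_right_mono)
        ultimately show ?thesis using R P1 m1 by (intro mult_mono) auto
      qed
      finally show ?thesis unfolding Pk .
    qed
    have hdz1: "\<bar>z1 - z1'\<bar> \<le> (2 * real l + 3) * (R^(2*l+3) * PK^2 * U2)"
    proof -
      have "\<bar>z1 - z1'\<bar> \<le> Trow n A A' b b' (Suc (Suc l)) i * (R^(Suc l) * Pp)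
          + real m * R * (2 * real (Suc l) * R^(2*l+1) * Pp^2 * U1)"
        unfolding z1_def z1'_def m_def
        by (rule sum_diff_row) (use a magA' IH R0 P1 in \<open>auto simp: m_def Pp_def U1_def\<close>)
      also have "\<dots> \<le> 1 * ((R^(2*l+3) * PK^2) * Tk) + (2 * real l + 2) * ((R^(2*l+3) * PK^2) * U1)"
      proof -
        have "R^(Suc l) * Pp \<le> R^(2*l+3) * PK^2"
        proof (rule mult_mono)
          show "R^(Suc l) \<le> R^(2*l+3)" by (rule Rpow) auto
          show "Pp \<le> PK^2" using PpPK PK1 by (simp add: power2_eq_square)
            (metis mult_le_cancel_left1 order_trans dual_order.trans less_le_not_le mult_right_mono zero_le_one order.trans)
        qed (use R0 P1 in auto)
        then have "Trow n A A' b b' (Suc (Suc l)) i * (R^(Suc l) * Pp) \<le> Tk * (R^(2*l+3) * PK^2)"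
          using row rownn R0 P1 by (rule_tac mult_mono) auto
        then have X1: "Trow n A A' b b' (Suc (Suc l)) i * (R^(Suc l) * Pp) \<le> (R^(2*l+3) * PK^2) * Tk"
          by (simp add: mult.commute)
        moreover have "real m * R * (2 * real (Suc l) * R^(2*l+1) * Pp^2 * U1)
           = (2 * real l + 2) * ((R^(2*l+2) * (Pp * PK)) * U1)" unfolding Pk by (simp add: pw)
        moreover have "(R^(2*l+2) * (Pp * PK)) * U1 \<le> (R^(2*l+3) * PK^2) * U1"
        proof (intro mult_right_mono mult_mono)
          show "R^(2*l+2) \<le> R^(2*l+3)" by (rule Rpow) auto
          show "Pp * PK \<le> PK^2" using PpPK PK1 by (simp add: power2_eq_square mult_right_mono)
        qed (use U1nn R0 P1 PK1 in auto)
        then have "(2 * real l + 2) * ((R^(2*l+2) * (Pp * PK)) * U1) \<le> (2 * real l + 2) * ((R^(2*l+3) * PK^2) * U1)"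
          by (intro mult_left_mono) auto
        ultimately show ?thesis unfolding mult_1 using X1 by linarith
      qed
      also have "\<dots> \<le> (2 * real l + 3) * ((R^(2*l+3) * PK^2) * (U1 + Tk))"
        using Tknn U1nn R0 by (intro lin_comb) auto
      finally show ?thesis unfolding U2 by (simp add: mult.assoc)
    qed
    have hdz2: "\<bar>z2 - z2'\<bar> \<le> (real l + 1 + K1) * (R^(3*l+5) * PK^3 * U2)"
    proof -
      have "\<bar>z2 - z2'\<bar> \<le> Trow n A A' b b' (Suc (Suc l)) i * (real (Suc l) * R^(2*l+2) * Pp^2)
          + real m * R * (K1 * R^(3*l+2) * Pp^3 * U1)"
        unfolding z2_def z2'_def m_def
        by (rule sum_diff_row) (use a magA' IH R0 P1 in \<open>auto simp: m_def Pp_def U1_def K1_def\<close>)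
      also have "\<dots> \<le> (real l + 1) * ((R^(3*l+5) * PK^3) * Tk) + K1 * ((R^(3*l+5) * PK^3) * U1)"
      proof -
        have "R^(2*l+2) * Pp^2 \<le> R^(3*l+5) * PK^3"
        proof (rule mult_mono)
          show "R^(2*l+2) \<le> R^(3*l+5)" by (rule Rpow) auto
          have "Pp^2 \<le> PK^2" using PpPK P1 by (intro power_mono) auto
          also have "PK^2 \<le> PK^3" using PK1 by (intro power_increasing) auto
          finally show "Pp^2 \<le> PK^3" .
        qed (use R0 PK1 in auto)
        then have "real (Suc l) * (R^(2*l+2) * Pp^2) \<le> real (Suc l) * (R^(3*l+5) * PK^3)"
          by (rule mult_left_mono) auto
        then have "Trow n A A' b b' (Suc (Suc l)) i * (real (Suc l) * (R^(2*l+2) * Pp^2))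
            \<le> Tk * (real (Suc l) * (R^(3*l+5) * PK^3))"
          using row rownn R0 P1 by (rule_tac mult_mono) auto
        then have X1: "Trow n A A' b b' (Suc (Suc l)) i * (real (Suc l) * R^(2*l+2) * Pp^2)
            \<le> (real l + 1) * ((R^(3*l+5) * PK^3) * Tk)"
          by (simp add: algebra_simps)
        moreover have "real m * R * (K1 * R^(3*l+2) * Pp^3 * U1) = K1 * ((R^(3*l+3) * (real m * Pp^3)) * U1)"
          by (simp add: pw)
        moreover have "(R^(3*l+3) * (real m * Pp^3)) * U1 \<le> (R^(3*l+5) * PK^3) * U1"
        proof (intro mult_right_mono mult_mono)
          show "R^(3*l+3) \<le> R^(3*l+5)" by (rule Rpow) auto
          have "real m * Pp^3 \<le> real m^3 * Pp^3"
            using m1 P1 by (intro mult_right_mono) (auto simp: power3_eq_cube intro: order_trans[OF _ mult_right_mono[of 1 "real m"]] one_le_power)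
          then show "real m * Pp^3 \<le> PK^3" unfolding Pk by (simp add: power_mult_distrib)
        qed (use U1nn R0 P1 m1 in auto)
        then have "K1 * ((R^(3*l+3) * (real m * Pp^3)) * U1) \<le> K1 * ((R^(3*l+5) * PK^3) * U1)"
          using K1nn by (intro mult_left_mono) auto
        ultimately show ?thesis using X1 by linarith
      qed
      also have "\<dots> \<le> (real l + 1 + K1) * ((R^(3*l+5) * PK^3) * (U1 + Tk))"
        using Tknn U1nn R0 K1nn PK1 by (intro lin_comb) auto
      finally show ?thesis unfolding U2 by (simp add: mult.assoc)
    qed
    show "\<bar>hidden \<rho> n A b x (Suc (Suc l)) i - hidden \<rho> n A' b' x (Suc (Suc l)) i\<bar>
          \<le> R^(Suc l) * real (piw n (Suc l)) * Ul n A A' b b' (Suc (Suc l))"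
      unfolding hidden_Suc' using order_trans[OF act_lip hz] by (simp add: z_def z'_def PK_def U2_def)
    show "\<bar>hd1 \<rho> n A b x p (Suc (Suc l)) i - hd1 \<rho> n A' b' x p (Suc (Suc l)) i\<bar>
          \<le> 2 * real (Suc (Suc l)) * R^(2*Suc l+1) * real (piw n (Suc l))^2 * Ul n A A' b b' (Suc (Suc l))"
    proof -
      have "\<bar>hd1 \<rho> n A b x p (Suc (Suc l)) i - hd1 \<rho> n A' b' x p (Suc (Suc l)) i\<bar>
         \<le> c2 \<rho> * (R^(Suc l) * PK * U2) * (R^(Suc (Suc l)) * PK) + (2 * real l + 3) * (R^(2*l+3) * PK^2 * U2)"
        unfolding hd1.simps(2)[of \<rho> n A b x p "Suc l" i] hd1.simps(2)[of \<rho> n A' b' x p "Suc l" i]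
          z_def[symmetric] z'_def[symmetric] m_def[symmetric] z1_def[symmetric] z1'_def[symmetric]
        by (rule comb1[OF hz hz1 hdz1])
      also have "\<dots> = c2 \<rho> * (R^(2*l+3) * PK^2 * U2) + (2 * real l + 3) * (R^(2*l+3) * PK^2 * U2)"
        by (simp add: pw)
      also have "\<dots> \<le> 1 * (R^(2*l+3) * PK^2 * U2) + (2 * real l + 3) * (R^(2*l+3) * PK^2 * U2)"
        using c2 U1nn Tknn R0 unfolding U2 by (intro add_right_mono mult_right_mono) auto
      also have "\<dots> = 2 * real (Suc (Suc l)) * R^(2*Suc l+1) * real (piw n (Suc l))^2 * Ul n A A' b b' (Suc (Suc l))"
        unfolding PK_def[symmetric] U2_def[symmetric] by (simp add: pw)
      finally show ?thesis .
    qed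
    show "\<bar>hd2 \<rho> n A b x p (Suc (Suc l)) i - hd2 \<rho> n A' b' x p (Suc (Suc l)) i\<bar>
          \<le> Kc \<rho> (Suc (Suc l)) * R^(3*Suc l+2) * real (piw n (Suc l))^3 * Ul n A A' b b' (Suc (Suc l))"
    proof -
      have "\<bar>hd2 \<rho> n A b x p (Suc (Suc l)) i - hd2 \<rho> n A' b' x p (Suc (Suc l)) i\<bar>
         \<le> c3 \<rho> * (R^(Suc l) * PK * U2) * (R^(Suc (Suc l)) * PK)^2
           + c2 \<rho> * ((2 * real l + 3) * (R^(2*l+3) * PK^2 * U2)) * (2 * (R^(Suc (Suc l)) * PK))
           + c2 \<rho> * (R^(Suc l) * PK * U2) * (real (Suc l) * R^(2*l+4) * PK^2)
           + (real l + 1 + K1) * (R^(3*l+5) * PK^3 * U2)"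
        unfolding hd2.simps(2)[of \<rho> n A b x p "Suc l" i] hd2.simps(2)[of \<rho> n A' b' x p "Suc l" i]
          z_def[symmetric] z'_def[symmetric] m_def[symmetric] z1_def[symmetric] z1'_def[symmetric]
          z2_def[symmetric] z2'_def[symmetric]
        by (rule comb2[OF hz hz1 hz1' hdz1 hz2 hdz2])
      also have "\<dots> = Kc \<rho> (Suc (Suc l)) * R^(3*Suc l+2) * real (piw n (Suc l))^3 * Ul n A A' b b' (Suc (Suc l))"
        unfolding PK_def[symmetric] U2_def[symmetric] by (simp add: pw K1_def)
      finally show ?thesis .
    qed
  qed
qed


lemma Trow_sq: "(Trow n A A' b b' k i)^2 \<le> (real (n (k - 1)) + 1) *
   ((\<Sum>j<n (k - 1). (A k i j - A' k i j)^2) + (b k i - b' k i)^2)"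
proof -
  have "(\<Sum>j<n (k - 1). \<bar>A k i j - A' k i j\<bar>)^2 \<le> (\<Sum>j<n (k - 1). 1) * (\<Sum>j<n (k - 1). (A k i j - A' k i j)^2)"
    by (rule cs_sum) auto
  then have h: "(\<Sum>j<n (k - 1). \<bar>A k i j - A' k i j\<bar>)^2 \<le> real (n (k - 1)) * (\<Sum>j<n (k - 1). (A k i j - A' k i j)^2)"
    by simp
  show ?thesis unfolding Trow_def
    by (rule cs2) (use h in \<open>auto intro: sum_nonneg\<close>)
qed

lemma Ul_bound: "Ul n A A' b b' L \<le> sqrt (real (nparams L n)) * param_dist L n A b A' b'"
proof -
  define Q where "Q k = (\<Sum>i<n k. (\<Sum>j<n (k - 1). (A k i j - A' k i j)^2) + (b k i - b' k i)^2)" for k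
  have Tl_sq: "(Tl n A A' b b' k)^2 \<le> real (n k * n (k - 1) + n k) * Q k" for k
  proof -
    have "(Tl n A A' b b' k)^2 \<le> (\<Sum>i<n k. real (n (k - 1)) + 1) * Q k"
      unfolding Tl_def Q_def
    proof (rule cs_sum)
      fix i
      show "0 \<le> Trow n A A' b b' k i \<and> 0 \<le> real (n (k - 1)) + 1 \<and>
        0 \<le> (\<Sum>j<n (k - 1). (A k i j - A' k i j)^2) + (b k i - b' k i)^2 \<and>
        (Trow n A A' b b' k i)^2 \<le> (real (n (k - 1)) + 1) * ((\<Sum>j<n (k - 1). (A k i j - A' k i j)^2) + (b k i - b' k i)^2)"
        by (intro conjI Trow_nonneg Trow_sq add_nonneg_nonneg sum_nonneg) auto
    qed simp
    then show ?thesis by (simp add: algebra_simps)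
  qed
  have "(Ul n A A' b b' L)^2 \<le> (\<Sum>k=1..L. real (n k * n (k - 1) + n k)) * (\<Sum>k=1..L. Q k)"
    unfolding Ul_def
  proof (rule cs_sum)
    fix k
    show "0 \<le> Tl n A A' b b' k \<and> 0 \<le> real (n k * n (k - 1) + n k) \<and> 0 \<le> Q k \<and>
       (Tl n A A' b b' k)^2 \<le> real (n k * n (k - 1) + n k) * Q k"
      unfolding Q_def by (intro conjI Tl_nonneg Tl_sq[unfolded Q_def] sum_nonneg add_nonneg_nonneg) auto
  qed simp
  also have "\<dots> = real (nparams L n) * (param_dist L n A b A' b')^2"
  proof -
    have "(\<Sum>k=1..L. Q k) = (\<Sum>l=1..L. (\<Sum>i<n l. \<Sum>j<n (l - 1). (A l i j - A' l i j)\<^sup>2)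
                    + (\<Sum>i<n l. (b l i - b' l i)\<^sup>2))"
      unfolding Q_def by (simp add: sum.distrib)
    moreover have "0 \<le> (\<Sum>l=1..L. (\<Sum>i<n l. \<Sum>j<n (l - 1). (A l i j - A' l i j)\<^sup>2)
                    + (\<Sum>i<n l. (b l i - b' l i)\<^sup>2))"
      by (intro sum_nonneg add_nonneg_nonneg) auto
    ultimately show ?thesis unfolding nparams_def param_dist_def by simp
  qed
  finally have "Ul n A A' b b' L \<le> sqrt (real (nparams L n) * (param_dist L n A b A' b')^2)"
    by (rule real_le_rsqrt)
  also have "\<dots> = sqrt (real (nparams L n)) * param_dist L n A b A' b'"
  proof -
    have "0 \<le> param_dist L n A b A' b'" unfolding param_dist_def
      by (intro real_sqrt_ge_zero sum_nonneg add_nonneg_nonneg) auto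
    then show ?thesis by (simp add: real_sqrt_mult)
  qed
  finally show ?thesis .
qed

lemma Kc_closed: "2 * Kc \<rho> m = real m * (real m - 1) + 2 * real m * c3 \<rho> + c2 \<rho> * (5 * real m * (real m - 1) + 4 * real m)"
proof (induction m)
  case 0 then show ?case by simp
next
  case (Suc m)
  have e: "2 * Kc \<rho> (Suc m) = 2 * Kc \<rho> m + 2 * (real m + c3 \<rho> + c2 \<rho> * (5 * real m + 2))" by simp
  show ?case unfolding e Suc.IH by (simp add: algebra_simps)
qed

lemma Kc_coef: "real l + 1 + Kc \<rho> (Suc l) \<le> 2 * real (Suc l) * real (Suc (Suc l)) * eta \<rho>"
proof -
  define M where "M = real (Suc l)"
  define S where "S = M * M"
  have M: "1 \<le> M" "0 \<le> S" by (auto simp: M_def S_def)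
  have e: "real l + 1 = M" by (simp add: M_def)
  have e2: "2 * real (Suc l) * real (Suc (Suc l)) = 2 * S + 2 * M" by (simp add: M_def S_def algebra_simps)
  have K: "2 * Kc \<rho> (Suc l) = S - M + 2 * M * c3 \<rho> + c2 \<rho> * (5 * S - M)"
    unfolding Kc_closed M_def[symmetric] S_def by (simp add: algebra_simps)
  show ?thesis
  proof (cases \<rho>)
    case Sigmoid
    have c: "c2 \<rho> = 1/4" "c3 \<rho> = 1/4" "eta \<rho> = 1" using Sigmoid by auto
    have K': "2 * Kc \<rho> (Suc l) = (9/4) * S - (3/4) * M" using K unfolding c by (simp del: Kc.simps add: algebra_simps)
    have e3: "2 * real (Suc l) * real (Suc (Suc l)) * eta \<rho> = 2 * S + 2 * M" using e2 unfolding c by simp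
    show ?thesis unfolding e3 e using K' M by linarith
  next
    case Tanh
    have c: "c2 \<rho> = 1" "c3 \<rho> = 2" "eta \<rho> = 2" using Tanh by auto
    have K': "2 * Kc \<rho> (Suc l) = 6 * S + 2 * M" using K unfolding c by (simp del: Kc.simps add: algebra_simps)
    have e3: "2 * real (Suc l) * real (Suc (Suc l)) * eta \<rho> = 4 * S + 4 * M" using e2 unfolding c by simp
    show ?thesis unfolding e3 e using K' M by linarith
  qed
qed


theorem lemma5p3:
  fixes \<rho> :: activation and L d :: nat and n :: "nat \<Rightarrow> nat" and R :: real
    and A A' :: "nat \<Rightarrow> nat \<Rightarrow> nat \<Rightarrow> real" and b b' :: "nat \<Rightarrow> nat \<Rightarrow> real"
    and \<Omega> :: "(nat \<Rightarrow> real) set" and x :: "nat \<Rightarrow> real" and p :: nat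
  assumes "R \<ge> 1" and "L \<ge> 2"
    and "n 0 = d" and "n L = 1" and "\<forall>l\<le>L. n l \<ge> 1"
    and "\<Omega> \<subseteq> {y. \<forall>i<d. \<bar>y i\<bar> < 1}"
    and "params_bounded L n R A b" and "params_bounded L n R A' b'"
    and "p < d" and "x \<in> \<Omega>"
  shows "\<bar>deriv (deriv (\<lambda>t. net \<rho> L n A b (x(p := t)))) (x p)
          - deriv (deriv (\<lambda>t. net \<rho> L n A' b' (x(p := t)))) (x p)\<bar>
         \<le> 2 * real (L - 1) * real L * eta \<rho> * sqrt (real (nparams L n))
             * real (piw n (L - 1)) ^ 3 * R ^ (3 * L - 3) * param_dist L n A b A' b'"
proof -
  define l where "l = L - 2"
  have L: "L = Suc (Suc l)" using assms(2) by (simp add: l_def)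
  have R: "R \<ge> 1" by fact
  have nl: "\<forall>l\<le>L. 1 \<le> n l" using assms(5) by auto
  have p: "p < n 0" using assms(3,9) by simp
  have xb: "\<forall>j<n 0. \<bar>x j\<bar> \<le> 1" using assms(3,6,10) by fastforce
  have pb: "params_bounded L n R A b" and pb': "params_bounded L n R A' b'" by fact+
  define m where "m = n (Suc l)"
  define Pp where "Pp = real (piw n l)"
  define PK where "PK = real (piw n (Suc l))"
  have Pk: "PK = real m * Pp" by (simp add: PK_def Pp_def m_def piw_Suc)
  have m1: "1 \<le> real m" using nl L by (auto simp: m_def)
  have P1: "1 \<le> Pp" unfolding Pp_def using nl L by (intro piw_ge1) auto
  have PK1: "1 \<le> PK" unfolding PK_def using nl L by (intro piw_ge1) auto
  have PpPK: "Pp \<le> PK" unfolding Pk using m1 P1 by (simp add: mult_right_mono[of 1 "real m" Pp, simplified])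
  define U1 where "U1 = Ul n A A' b b' (Suc l)"
  define TL where "TL = Tl n A A' b b' L"
  define UL where "UL = Ul n A A' b b' L"
  have UL: "UL = U1 + TL" unfolding UL_def U1_def TL_def L by (rule Ul_Suc)
  have U1nn: "0 \<le> U1" unfolding U1_def by (rule Ul_nonneg)
  have TLnn: "0 \<le> TL" unfolding TL_def by (rule Tl_nonneg)
  define K1 where "K1 = Kc \<rho> (Suc l)"
  have K1nn: "0 \<le> K1" unfolding K1_def by (rule Kc_nonneg)
  have R0: "0 \<le> R" using R by simp
  have Rpow: "R^a \<le> R^b" if "a \<le> b" for a b using R that by (intro power_increasing) auto
  have magA': "\<forall>j<m. \<bar>hd2 \<rho> n A' b' x p (Suc l) j\<bar> \<le> real (Suc l) * R^(2*l+2) * Pp^2"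
    using mag[OF R pb' nl p, of l \<rho> x] L by (auto simp: m_def Pp_def)
  have IH: "\<forall>j<m. \<bar>hd2 \<rho> n A b x p (Suc l) j - hd2 \<rho> n A' b' x p (Suc l) j\<bar>
          \<le> K1 * R^(3*l+2) * Pp^3 * U1"
    using diff_layers[OF R pb pb' nl p xb, of l \<rho>] L by (auto simp: m_def Pp_def U1_def K1_def)
  have a: "\<forall>j<m. \<bar>A (Suc (Suc l)) 0 j\<bar> \<le> R" using pb_A[OF pb, of L 0] L assms(4)
    by (auto simp: m_def)
  have row: "Trow n A A' b b' (Suc (Suc l)) 0 \<le> TL"
    unfolding TL_def L using Trow_le[where n=n and k="Suc (Suc l)" and i=0] assms(4) L by simp
  have rownn: "0 \<le> Trow n A A' b b' (Suc (Suc l)) 0" by (rule Trow_nonneg)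
  have Ynn: "0 \<le> R^(3*l+3) * PK^3" using R0 PK1 by simp
  have main: "\<bar>(\<Sum>j<m. A (Suc (Suc l)) 0 j * hd2 \<rho> n A b x p (Suc l) j)
      - (\<Sum>j<m. A' (Suc (Suc l)) 0 j * hd2 \<rho> n A' b' x p (Suc l) j)\<bar>
      \<le> (real l + 1 + K1) * (R^(3*l+3) * PK^3 * UL)"
  proof -
    have "\<bar>(\<Sum>j<m. A (Suc (Suc l)) 0 j * hd2 \<rho> n A b x p (Suc l) j)
      - (\<Sum>j<m. A' (Suc (Suc l)) 0 j * hd2 \<rho> n A' b' x p (Suc l) j)\<bar>
      \<le> Trow n A A' b b' (Suc (Suc l)) 0 * (real (Suc l) * R^(2*l+2) * Pp^2)
          + real m * R * (K1 * R^(3*l+2) * Pp^3 * U1)"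
      unfolding m_def
      by (rule sum_diff_row) (use a magA' IH R0 P1 in \<open>auto simp: m_def\<close>)
    also have "\<dots> \<le> (real l + 1) * ((R^(3*l+3) * PK^3) * TL) + K1 * ((R^(3*l+3) * PK^3) * U1)"
    proof -
      have "R^(2*l+2) * Pp^2 \<le> R^(3*l+3) * PK^3"
      proof (rule mult_mono)
        show "R^(2*l+2) \<le> R^(3*l+3)" by (rule Rpow) auto
        have "Pp^2 \<le> PK^2" using PpPK P1 by (intro power_mono) auto
        also have "PK^2 \<le> PK^3" using PK1 by (intro power_increasing) auto
        finally show "Pp^2 \<le> PK^3" .
      qed (use R0 PK1 in auto)
      then have "real (Suc l) * (R^(2*l+2) * Pp^2) \<le> real (Suc l) * (R^(3*l+3) * PK^3)"
        by (rule mult_left_mono) auto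
      then have "Trow n A A' b b' (Suc (Suc l)) 0 * (real (Suc l) * (R^(2*l+2) * Pp^2))
          \<le> TL * (real (Suc l) * (R^(3*l+3) * PK^3))"
        using row rownn R0 P1 by (rule_tac mult_mono) auto
      then have X1: "Trow n A A' b b' (Suc (Suc l)) 0 * (real (Suc l) * R^(2*l+2) * Pp^2)
          \<le> (real l + 1) * ((R^(3*l+3) * PK^3) * TL)"
        by (simp add: algebra_simps)
      have "real m * R * (K1 * R^(3*l+2) * Pp^3 * U1) = K1 * ((R^(3*l+3) * (real m * Pp^3)) * U1)"
        by (simp add: pw)
      moreover have "(R^(3*l+3) * (real m * Pp^3)) * U1 \<le> (R^(3*l+3) * PK^3) * U1"
      proof (intro mult_right_mono mult_left_mono)
        have "real m * Pp^3 \<le> real m^3 * Pp^3"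
          using m1 P1 by (intro mult_right_mono) (auto simp: power3_eq_cube intro: order_trans[OF _ mult_right_mono[of 1 "real m"]] one_le_power)
        then show "real m * Pp^3 \<le> PK^3" unfolding Pk by (simp add: power_mult_distrib)
      qed (use U1nn R0 in auto)
      then have "K1 * ((R^(3*l+3) * (real m * Pp^3)) * U1) \<le> K1 * ((R^(3*l+3) * PK^3) * U1)"
        using K1nn by (intro mult_left_mono) auto
      ultimately show ?thesis using X1 by linarith
    qed
    also have "\<dots> \<le> (real l + 1 + K1) * ((R^(3*l+3) * PK^3) * (U1 + TL))"
      using TLnn U1nn Ynn K1nn by (intro lin_comb) auto
    finally show ?thesis unfolding UL by (simp add: mult.assoc)
  qed
  have fin: "(real l + 1 + K1) * (R^(3*l+3) * PK^3 * UL)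
     \<le> (2 * real (Suc l) * real (Suc (Suc l)) * eta \<rho>)
         * (R^(3*l+3) * PK^3 * (sqrt (real (nparams L n)) * param_dist L n A b A' b'))"
  proof (rule mult_mono)
    show "real l + 1 + K1 \<le> 2 * real (Suc l) * real (Suc (Suc l)) * eta \<rho>"
      unfolding K1_def by (rule Kc_coef)
    show "R^(3*l+3) * PK^3 * UL \<le> R^(3*l+3) * PK^3 * (sqrt (real (nparams L n)) * param_dist L n A b A' b')"
      unfolding UL_def using Ynn Ul_bound by (rule mult_left_mono[rotated])
    show "0 \<le> 2 * real (Suc l) * real (Suc (Suc l)) * eta \<rho>" by (cases \<rho>) auto
    show "0 \<le> R^(3*l+3) * PK^3 * UL" using Ynn UL U1nn TLnn by simp
  qed
  have lhs: "deriv (deriv (\<lambda>t. net \<rho> L n A b (x(p := t)))) (x p)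
          - deriv (deriv (\<lambda>t. net \<rho> L n A' b' (x(p := t)))) (x p)
     = (\<Sum>j<m. A (Suc (Suc l)) 0 j * hd2 \<rho> n A b x p (Suc l) j)
      - (\<Sum>j<m. A' (Suc (Suc l)) 0 j * hd2 \<rho> n A' b' x p (Suc l) j)"
    unfolding deriv_net2 by (simp add: L m_def)
  have rhs: "(2 * real (Suc l) * real (Suc (Suc l)) * eta \<rho>)
         * (R^(3*l+3) * PK^3 * (sqrt (real (nparams L n)) * param_dist L n A b A' b'))
     = 2 * real (L - 1) * real L * eta \<rho> * sqrt (real (nparams L n))
             * real (piw n (L - 1)) ^ 3 * R ^ (3 * L - 3) * param_dist L n A b A' b'"
    unfolding PK_def by (simp add: L algebra_simps)
  show ?thesis unfolding lhs using main fin rhs by linarith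
qed


end
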